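(* Let $G$ be a connected graph and $(u,v)\in V_p$. Then $r_w(u,v)=0$ for all $w\in V(G)\setminus\{u,v\}$ if and only if $V_i(u)\setminus\{v\}=V_i(v)\setminus\{u\}$ for every $1\le i\le\mathrm{diam}(G)$, where $V_i(x)=\{y\in V(G)\setminus\{x\}: d(x,y)=i\}$.
   Context: Graphs are finite, simple and connected; $d(u,v)$ denotes the shortest-path distance. $V_p$ denotes the set of all unordered pairs $(u,v)$ of distinct vertices. A vertex $x$ resolves the pair $(u,v)$ if $d(x,u)\neq d(x,v)$. For $(u,v)\in V_p$, $R(u,v)$ is the set of all vertices resolving $(u,v)$. The resolving share of a vertex $w$ for $(u,v)$ is $r_w(u,v)=\frac{1}{|R(u,v)|}$ if $w$ resolves $u$ and $v$, and $r_w(u,v)=0$ otherwise. (In the paper the condition $V_i(u)\setminus\{v\}=V_i(v)\setminus\{u\}$ for all $i$ is written $\Pi_u-\{v\}=\Pi_v-\{u\}$, where $\Pi_x=\{V_i(x):1\le i\le \mathrm{diam}(G)\}$ is the distance partition with respect to $x$.) *)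

theory Defs
  imports Main "HOL-Library.Extended_Real" Complex_Main
begin

definition simple_graph :: "'a set \<Rightarrow> ('a \<Rightarrow> 'a \<Rightarrow> bool) \<Rightarrow> bool" where
  "simple_graph V E \<longleftrightarrow> finite V \<and> V \<noteq> {} \<and>
     (\<forall>x y. E x y \<longrightarrow> x \<in> V \<and> y \<in> V) \<and>
     (\<forall>x y. E x y \<longrightarrow> E y x) \<and> (\<forall>x. \<not> E x x)"

definition walk :: "('a \<Rightarrow> 'a \<Rightarrow> bool) \<Rightarrow> 'a list \<Rightarrow> bool" where
  "walk E p \<longleftrightarrow> p \<noteq> [] \<and> (\<forall>i. Suc i < length p \<longrightarrow> E (p ! i) (p ! Suc i))"

definition has_walk :: "('a \<Rightarrow> 'a \<Rightarrow> bool) \<Rightarrow> 'a \<Rightarrow> 'a \<Rightarrow> nat \<Rightarrow> bool" where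
  "has_walk E x y n \<longleftrightarrow> (\<exists>p. walk E p \<and> hd p = x \<and> last p = y \<and> length p = Suc n)"

definition connected_graph :: "'a set \<Rightarrow> ('a \<Rightarrow> 'a \<Rightarrow> bool) \<Rightarrow> bool" where
  "connected_graph V E \<longleftrightarrow> simple_graph V E \<and>
     (\<forall>x\<in>V. \<forall>y\<in>V. \<exists>n. has_walk E x y n)"

text \<open>Shortest-path distance (meaningful for vertices of a connected graph).\<close>
definition gdist :: "('a \<Rightarrow> 'a \<Rightarrow> bool) \<Rightarrow> 'a \<Rightarrow> 'a \<Rightarrow> nat" where
  "gdist E x y = (LEAST n. has_walk E x y n)"

definition diam :: "'a set \<Rightarrow> ('a \<Rightarrow> 'a \<Rightarrow> bool) \<Rightarrow> nat" where
  "diam V E = Max {gdist E x y | x y. x \<in> V \<and> y \<in> V}"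

definition dist_layer :: "'a set \<Rightarrow> ('a \<Rightarrow> 'a \<Rightarrow> bool) \<Rightarrow> 'a \<Rightarrow> nat \<Rightarrow> 'a set" where
  "dist_layer V E x i = {y \<in> V - {x}. gdist E x y = i}"

definition resolves :: "('a \<Rightarrow> 'a \<Rightarrow> bool) \<Rightarrow> 'a \<Rightarrow> 'a \<Rightarrow> 'a \<Rightarrow> bool" where
  "resolves E x u v \<longleftrightarrow> gdist E x u \<noteq> gdist E x v"

definition resolving_set_of :: "'a set \<Rightarrow> ('a \<Rightarrow> 'a \<Rightarrow> bool) \<Rightarrow> 'a \<Rightarrow> 'a \<Rightarrow> 'a set" where
  "resolving_set_of V E u v = {x \<in> V. resolves E x u v}"

definition resolving_share :: "'a set \<Rightarrow> ('a \<Rightarrow> 'a \<Rightarrow> bool) \<Rightarrow> 'a \<Rightarrow> 'a \<Rightarrow> 'a \<Rightarrow> real" where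
  "resolving_share V E w u v =
     (if resolves E w u v then 1 / real (card (resolving_set_of V E u v)) else 0)"

end

theory Submission
  imports Defs
begin

lemma walk_rev: "(\<forall>x y. E x y \<longrightarrow> E y x) \<Longrightarrow> walk E p \<Longrightarrow> walk E (rev p)"
  unfolding walk_def
proof (intro conjI allI impI)
  assume s: "\<forall>x y. E x y \<longrightarrow> E y x" and w: "p \<noteq> [] \<and> (\<forall>i. Suc i < length p \<longrightarrow> E (p ! i) (p ! Suc i))"
  show "rev p \<noteq> []" using w by simp
  fix i assume i: "Suc i < length (rev p)"
  have "E (p ! (length p - Suc (Suc i))) (p ! Suc (length p - Suc (Suc i)))"
    using w i by auto
  moreover have "Suc (length p - Suc (Suc i)) = length p - Suc i" using i by simp
  ultimately show "E (rev p ! i) (rev p ! Suc i)" using s i by (auto simp: rev_nth)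
qed

lemma has_walk_sym: "(\<forall>x y. E x y \<longrightarrow> E y x) \<Longrightarrow> has_walk E x y n \<Longrightarrow> has_walk E y x n"
  unfolding has_walk_def
proof -
  assume s: "\<forall>x y. E x y \<longrightarrow> E y x" and "\<exists>p. walk E p \<and> hd p = x \<and> last p = y \<and> length p = Suc n"
  then obtain p where p: "walk E p" "hd p = x" "last p = y" "length p = Suc n" by blast
  have "p \<noteq> []" using p(1) by (simp add: walk_def)
  then show "\<exists>p. walk E p \<and> hd p = y \<and> last p = x \<and> length p = Suc n"
    using p walk_rev[OF s p(1)] by (intro exI[of _ "rev p"]) (auto simp: hd_rev last_rev)
qed

lemma gdist_sym: "(\<forall>x y. E x y \<longrightarrow> E y x) \<Longrightarrow> gdist E x y = gdist E y x"
proof -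
  assume s: "\<forall>x y. E x y \<longrightarrow> E y x"
  have "has_walk E x y = has_walk E y x" 
  proof (intro ext iffI)
    fix n assume "has_walk E x y n" thus "has_walk E y x n" by (rule has_walk_sym[OF s])
  next
    fix n assume "has_walk E y x n" thus "has_walk E x y n" by (rule has_walk_sym[OF s])
  qed
  thus ?thesis unfolding gdist_def by (rule arg_cong[where f=Least])
qed

lemma has_walk_0: "has_walk E x y 0 \<Longrightarrow> x = y"
  unfolding has_walk_def by (auto simp: length_Suc_conv)

theorem lemma2p4:
  fixes V :: "'a set" and E :: "'a \<Rightarrow> 'a \<Rightarrow> bool" and u v :: 'a
  assumes "connected_graph V E"
    and "u \<in> V" and "v \<in> V" and "u \<noteq> v"
  shows "(\<forall>w \<in> V - {u, v}. resolving_share V E w u v = 0) \<longleftrightarrow>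
         (\<forall>i. 1 \<le> i \<and> i \<le> diam V E \<longrightarrow>
              dist_layer V E u i - {v} = dist_layer V E v i - {u})"
proof -
  have sg: "simple_graph V E" and conn: "\<forall>x\<in>V. \<forall>y\<in>V. \<exists>n. has_walk E x y n"
    using assms(1) by (auto simp: connected_graph_def)
  have s: "\<forall>x y. E x y \<longrightarrow> E y x" and fin: "finite V" using sg by (auto simp: simple_graph_def)
  have pos: "gdist E x y \<ge> 1" if "x \<in> V" "y \<in> V" "x \<noteq> y" for x y
  proof (rule ccontr)
    assume "\<not> 1 \<le> gdist E x y"
    hence z: "gdist E x y = 0" by simp
    have "\<exists>n. has_walk E x y n" using conn \<open>x \<in> V\<close> \<open>y \<in> V\<close> by blast
    then obtain n where "has_walk E x y n" by (elim exE)
    hence "has_walk E x y (gdist E x y)" unfolding gdist_def by (rule LeastI)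
    with z have "has_walk E x y 0" by simp
    hence "x = y" by (rule has_walk_0)
    with that show False by simp
  qed
  have le: "gdist E x y \<le> diam V E" if "x \<in> V" "y \<in> V" for x y
  proof -
    have "{gdist E x y | x y. x \<in> V \<and> y \<in> V} = (\<lambda>(x,y). gdist E x y) ` (V \<times> V)" by auto
    hence "finite {gdist E x y | x y. x \<in> V \<and> y \<in> V}" using fin by simp
    thus ?thesis unfolding diam_def using that by (intro Max_ge) auto
  qed
  have L: "(\<forall>w \<in> V - {u, v}. resolving_share V E w u v = 0) \<longleftrightarrow>
           (\<forall>w \<in> V - {u, v}. gdist E u w = gdist E v w)"
  proof -
    have "resolving_share V E w u v = 0 \<longleftrightarrow> gdist E u w = gdist E v w" if w: "w \<in> V" for w
    proof
      assume h: "resolving_share V E w u v = 0"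
      show "gdist E u w = gdist E v w"
      proof (rule ccontr)
        assume n: "gdist E u w \<noteq> gdist E v w"
        hence r: "resolves E w u v" using gdist_sym[OF s] by (simp add: resolves_def)
        hence "w \<in> resolving_set_of V E u v" using w by (simp add: resolving_set_of_def)
        moreover have "finite (resolving_set_of V E u v)" using fin by (simp add: resolving_set_of_def)
        ultimately have "card (resolving_set_of V E u v) > 0" using card_gt_0_iff by blast
        thus False using h r by (simp add: resolving_share_def)
      qed
    next
      assume "gdist E u w = gdist E v w"
      thus "resolving_share V E w u v = 0" using gdist_sym[OF s]
        by (simp add: resolving_share_def resolves_def)
    qed
    thus ?thesis by auto
  qed
  have R: "(\<forall>i. 1 \<le> i \<and> i \<le> diam V E \<longrightarrow>
              dist_layer V E u i - {v} = dist_layer V E v i - {u}) \<longleftrightarrow>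
           (\<forall>w \<in> V - {u, v}. gdist E u w = gdist E v w)"
  proof
    assume h: "\<forall>i. 1 \<le> i \<and> i \<le> diam V E \<longrightarrow>
              dist_layer V E u i - {v} = dist_layer V E v i - {u}"
    show "\<forall>w \<in> V - {u, v}. gdist E u w = gdist E v w"
    proof
      fix w assume w: "w \<in> V - {u, v}"
      let ?i = "gdist E u w"
      have "w \<in> dist_layer V E u ?i - {v}" using w by (simp add: dist_layer_def)
      moreover have "1 \<le> ?i" "?i \<le> diam V E" using pos le w assms by auto
      ultimately have "w \<in> dist_layer V E v ?i - {u}" using h by blast
      thus "gdist E u w = gdist E v w" by (simp add: dist_layer_def)
    qed
  next
    assume h: "\<forall>w \<in> V - {u, v}. gdist E u w = gdist E v w"
    show "\<forall>i. 1 \<le> i \<and> i \<le> diam V E \<longrightarrow>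
              dist_layer V E u i - {v} = dist_layer V E v i - {u}"
      using h by (auto simp: dist_layer_def)
  qed
  show ?thesis using L R by simp
qed

end
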